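(* Take $\Omega=(0,\infty)$. The gamma function is a germinating function: for every $\delta>0$ there exists a Lebesgue measurable set $S\subseteq(0,\infty)$ with Lebesgue measure $\lambda(S)<\delta$ that is a fundamental set for $\Gamma$, i.e. $\mathrm{Cl}_\Omega(S)=(0,\infty)$.
   Context: Let $\Omega$ be either $(0,\infty)$ or $D=\mathbb{C}\setminus\{0,-1,-2,\dots\}$. An admissible instance (relative to $\Omega$) is one of the following finite lists of points, all entries of which are required to lie in $\Omega$: (i) $(z+1,\,z)$ for $z\in\Omega$ with $z+1\in\Omega$ (corresponding to the identity $\Gamma(z+1)=z\Gamma(z)$); (ii) $(z,\,1-z)$ for $z\in\Omega\setminus\mathbb{Z}$ with $1-z\in\Omega$ (corresponding to $\Gamma(z)\Gamma(1-z)=\pi/\sin(\pi z)$); (iii) for an integer $n\ge 2$, $\big(z,\,\tfrac{z}{n},\,\tfrac{z+1}{n},\dots,\tfrac{z+n-1}{n}\big)$ (corresponding to Gauss's multiplication formula $(2\pi)^{(n-1)/2}n^{1/2-z}\Gamma(z)=\prod_{j=0}^{n-1}\Gamma(\tfrac{z+j}{n})$). For $B\subseteq\Omega$, a point $p\in\Omega$ is obtained from $B$ in one step if there is an admissible instance in which $p$ occurs exactly once as an entry and every other entry lies in $B$. Set $B_0=B$, $B_{i+1}=B_i\cup\{p: p \text{ obtained from } B_i \text{ in one step}\}$, and $\mathrm{Cl}_\Omega(B)=\bigcup_{i\ge0}B_i$ (the set of points at which the value of $\Gamma$ is determined by its values on $B$ via finitely many applications of the identities). For $A,B\subseteq\Omega$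 write $A\preceq B$ if $A\subseteq \mathrm{Cl}_\Omega(B)$. A set $S\subseteq\Omega$ is a fundamental set (for $\Gamma$ on $\Omega$) if $\mathrm{Cl}_\Omega(S)=\Omega$. *)

theory Defs
  imports "HOL-Analysis.Analysis"
begin

text \<open>Admissible instances relative to a domain Omega (real case): finite lists of
points, all entries in Omega, coming from the three Gamma identities.\<close>

definition admissible :: "real set \<Rightarrow> real list set" where
  "admissible \<Omega> =
     {L. set L \<subseteq> \<Omega> \<and>
        ((\<exists>z. L = [z + 1, z]) \<or>
         (\<exists>z. z \<notin> \<int> \<and> L = [z, 1 - z]) \<or>
         (\<exists>z (n::nat). n \<ge> 2 \<and> L = z # map (\<lambda>j. (z + real j) / real n) [0..<n]))}"

definition one_step :: "real set \<Rightarrow> real set \<Rightarrow> real set" where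
  "one_step \<Omega> B = {p \<in> \<Omega>. \<exists>L \<in> admissible \<Omega>. count_list L p = 1 \<and>
                       (\<forall>q \<in> set L. q \<noteq> p \<longrightarrow> q \<in> B)}"

fun closure_seq :: "real set \<Rightarrow> real set \<Rightarrow> nat \<Rightarrow> real set" where
  "closure_seq \<Omega> B 0 = B"
| "closure_seq \<Omega> B (Suc i) = closure_seq \<Omega> B i \<union> one_step \<Omega> (closure_seq \<Omega> B i)"

definition gamma_Cl :: "real set \<Rightarrow> real set \<Rightarrow> real set" where
  "gamma_Cl \<Omega> B = (\<Union>i. closure_seq \<Omega> B i)"

definition fundamental_set :: "real set \<Rightarrow> real set \<Rightarrow> bool" where
  "fundamental_set \<Omega> S \<longleftrightarrow> S \<subseteq> \<Omega> \<and> gamma_Cl \<Omega> S = \<Omega>"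

end

theory Submission
  imports Defs
begin

lemma Ioo_leb: "{a<..<b::real} \<in> sets lebesgue"
  by (simp add: sets_completionI_sets)

lemma Ioo_leb_meas: "a \<le> b \<Longrightarrow> emeasure lebesgue {a<..<b::real} = ennreal (b - a)"
  by (simp add: emeasure_completion emeasure_lborel_Ioo)

lemma closure_seq_mono: "i \<le> j \<Longrightarrow> closure_seq \<Omega> B i \<subseteq> closure_seq \<Omega> B j"
  by (induction j rule: dec_induct) auto

lemma closure_seq_sub: "B \<subseteq> \<Omega> \<Longrightarrow> closure_seq \<Omega> B i \<subseteq> \<Omega>"
  by (induction i) (auto simp: one_step_def)

definition SS :: "nat \<Rightarrow> nat \<Rightarrow> real set" where
  "SS Q N = {0<..1} \<inter> (\<Union>k\<in>{0..N}. {(real k - 1/Q)/N <..< (real k + 1/Q)/N})"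

lemma inSS:
  assumes "N > 0" "Q \<ge> 1" "0 < u" "u \<le> 1" "\<bar>real N * u - of_int m\<bar> < 1/Q"
  shows "u \<in> SS Q N"
proof -
  have q1: "1/real Q \<le> 1" using assms(2) by simp
  have Nu: "0 < real N * u" "real N * u \<le> real N"
    using assms by (auto simp: mult_le_cancel_left1)
  have "of_int m > real N * u - 1/Q" "of_int m < real N * u + 1/Q" using assms(5) by linarith+
  hence "m > -1" "m < int N + 1" using Nu q1 by linarith+
  hence m0: "m \<ge> 0" "nat m \<le> N" by auto
  have mm: "real (nat m) = of_int m" using m0 by simp
  have "(real (nat m) - 1/Q)/N < u \<and> u < (real (nat m) + 1/Q)/N"
    using assms(1,5) mm by (auto simp: field_simps abs_less_iff)
  thus ?thesis using assms(3,4) m0 unfolding SS_def by (auto intro!: bexI[of _ "nat m"])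
qed

lemma SS_meas:
  assumes "N > 0" "Q \<ge> 1"
  shows "SS Q N \<in> sets lebesgue" "emeasure lebesgue (SS Q N) \<le> ennreal (4 / Q)"
proof -
  let ?A = "\<lambda>k::nat. {(real k - 1/Q)/N <..< (real k + 1/Q)/N}"
  have A: "?A ` {0..N} \<subseteq> sets lebesgue" using Ioo_leb by auto
  have U: "(\<Union>k\<in>{0..N}. ?A k) \<in> sets lebesgue"
    by (rule sets.finite_UN) (use Ioo_leb in auto)
  have I: "{0<..1::real} \<in> sets lebesgue"
    by (simp add: sets_completionI_sets)
  show "SS Q N \<in> sets lebesgue" unfolding SS_def using U I by auto
  have "emeasure lebesgue (SS Q N) \<le> emeasure lebesgue (\<Union>k\<in>{0..N}. ?A k)"
    by (rule emeasure_mono) (use U in \<open>auto simp: SS_def\<close>)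
  also have "\<dots> \<le> (\<Sum>k\<in>{0..N}. emeasure lebesgue (?A k))"
    by (rule emeasure_subadditive_finite) (use A in auto)
  also have "\<dots> = (\<Sum>k\<in>{0..N}. ennreal (2/(real Q * real N)))"
  proof (rule sum.cong)
    fix k assume "k \<in> {0..N}"
    have "(real k - 1/Q)/N \<le> (real k + 1/Q)/N" using assms
      by (simp add: divide_right_mono)
    hence "emeasure lebesgue (?A k) = ennreal ((real k + 1/Q)/N - (real k - 1/Q)/N)"
      by (rule Ioo_leb_meas)
    also have "(real k + 1/Q)/N - (real k - 1/Q)/N = 2/(real Q * real N)"
      using assms by (simp add: field_simps)
    finally show "emeasure lebesgue (?A k) = ennreal (2/(real Q * real N))" .
  qed simp
  also have "\<dots> = ennreal (real (N+1) * (2/(real Q * real N)))"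
  proof -
    have "(\<Sum>k\<in>{0..N}. ennreal (2/(real Q * real N))) = of_nat (N+1) * ennreal (2/(real Q * real N))"
      by simp
    also have "\<dots> = ennreal (real (N+1)) * ennreal (2/(real Q * real N))"
      by (simp only: ennreal_of_nat_eq_real_of_nat)
    also have "\<dots> = ennreal (real (N+1) * (2/(real Q * real N)))"
      by (rule ennreal_mult[symmetric]) auto
    finally show ?thesis .
  qed
  also have "\<dots> \<le> ennreal (4/Q)"
  proof (rule ennreal_leI)
    have "real (N+1) \<le> 2 * real N" using assms by simp
    hence "real (N+1) * (2/(real Q * real N)) \<le> 2 * real N * (2/(real Q * real N))"
      by (rule mult_right_mono) (use assms in simp)
    also have "\<dots> = 4/Q" using assms by (simp add: field_simps)
    finally show "real (N+1) * (2/(real Q * real N)) \<le> 4/Q" .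
  qed
  finally show "emeasure lebesgue (SS Q N) \<le> ennreal (4 / Q)" .
qed

lemma unit_part:
  assumes "Q \<ge> 1" "0 < x" "x \<le> 1"
  shows "x \<in> closure_seq {0<..} (SS Q (fact Q)) 1"
proof (cases "x \<in> SS Q (fact Q)")
  case True thus ?thesis by simp
next
  case False
  define N :: nat where "N = fact Q"
  have N0: "N > 0" unfolding N_def by simp
  have Q0: "Q > 0" using assms by simp
  obtain h k where hk: "0 < k" "k \<le> int Q" "\<bar>of_int k * x - of_int h\<bar> < 1/Q"
    using Dirichlet_approx[OF Q0, of x] by blast
  define q where "q = nat k"
  have q: "q \<ge> 1" "q \<le> Q" "real q = of_int k" using hk unfolding q_def by auto
  have "q dvd N" unfolding N_def using q by (simp add: dvd_fact)
  then obtain n where Nqn: "N = q * n" by (auto elim: dvdE)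
  have n0: "n > 0" using N0 Nqn by (cases n) auto
  define u where "u = (\<lambda>j::nat. (x + real j) / real n)"
  have uS: "u j \<in> SS Q N" if "j < n" for j
  proof -
    have "0 < u j" using assms n0 unfolding u_def by simp
    moreover have "u j \<le> 1"
    proof -
      have "real j \<le> real n - 1" using that by linarith
      hence "x + real j \<le> real n" using assms by linarith
      thus ?thesis unfolding u_def using n0 by simp
    qed
    moreover have "\<bar>real N * u j - of_int (h + k * int j)\<bar> < 1/Q"
    proof -
      have "real N * u j = of_int k * x + of_int k * real j"
        unfolding u_def Nqn using n0 q(3) by (simp add: field_simps)
      thus ?thesis using hk(3) by (simp add: algebra_simps)
    qed
    ultimately show ?thesis using inSS[OF N0 assms(1)] by blast
  qed
  have xS: "x \<notin> SS Q N" using False unfolding N_def .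
  have n2: "n \<ge> 2"
  proof (rule ccontr)
    assume "\<not> n \<ge> 2"
    hence "n = 1" using n0 by linarith
    hence "u 0 = x" unfolding u_def by simp
    thus False using uS[of 0] xS \<open>n = 1\<close> by simp
  qed
  define L where "L = x # map u [0..<n]"
  have setL: "set L = insert x (u ` {0..<n})" unfolding L_def by simp
  have xnot: "x \<notin> set (map u [0..<n])" using uS xS by auto
  have cnt: "count_list L x = 1" unfolding L_def using xnot by (simp add: count_notin)
  have SSpos: "SS Q N \<subseteq> {0<..}" unfolding SS_def by auto
  have adm: "L \<in> admissible {0<..}"
    unfolding admissible_def
  proof (intro CollectI conjI disjI2)
    have "\<forall>j<n. u j > 0" using uS SSpos by force
    thus "set L \<subseteq> {0<..}" using setL assms by auto
    show "\<exists>z n. 2 \<le> n \<and> L = z # map (\<lambda>j. (z + real j) / real n) [0..<n]"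
      using n2 unfolding L_def u_def by blast
  qed
  have "x \<in> one_step {0<..} (SS Q N)"
    unfolding one_step_def using adm cnt setL uS assms
    by (intro CollectI conjI bexI[of _ L]) auto
  thus ?thesis unfolding N_def by simp
qed

lemma all_part:
  assumes "Q \<ge> 1"
  shows "0 < x \<Longrightarrow> x \<le> real m + 1 \<Longrightarrow> x \<in> closure_seq {0<..} (SS Q (fact Q)) (m + 1)"
proof (induction m arbitrary: x)
  case 0 thus ?case using unit_part[OF assms] by simp
next
  case (Suc m)
  let ?C = "closure_seq {0<..} (SS Q (fact Q))"
  show ?case
  proof (cases "x \<le> real m + 1")
    case True
    hence "x \<in> ?C (m+1)" using Suc by blast
    thus ?thesis using closure_seq_mono[of "m+1" "Suc m + 1"] by auto
  next
    case False
    hence "x - 1 \<in> ?C (m+1)" using Suc by auto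
    moreover have "[x, x - 1] \<in> admissible {0<..}"
      unfolding admissible_def using False
      by (auto intro!: exI[of _ "x - 1"])
    moreover have "count_list [x, x - 1] x = 1" by simp
    ultimately have "x \<in> one_step {0<..} (?C (m+1))"
      unfolding one_step_def using Suc.prems by (intro CollectI conjI bexI[of _ "[x, x - 1]"]) auto
    thus ?thesis by simp
  qed
qed

theorem mainTheorem8:
  fixes \<delta> :: real
  assumes "\<delta> > 0"
  shows "\<exists>S. S \<in> sets lebesgue \<and> emeasure lebesgue S < ennreal \<delta> \<and>
             fundamental_set {0<..} S"
proof -
  obtain Q :: nat where Q: "4 / \<delta> < real Q" using reals_Archimedean2 by blast
  have "0 < 4 / \<delta>" using assms by simp
  hence Q1: "Q \<ge> 1" using Q by (cases Q) auto
  have lt: "4 / real Q < \<delta>" using Q assms Q1 by (simp add: field_simps)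
  define S where "S = SS Q (fact Q)"
  have N0: "(fact Q :: nat) > 0" by simp
  have m: "S \<in> sets lebesgue" "emeasure lebesgue S \<le> ennreal (4 / Q)"
    using SS_meas[OF N0 Q1] unfolding S_def by auto
  have "emeasure lebesgue S < ennreal \<delta>"
    using m(2) lt assms by (meson ennreal_lessI le_less_trans)
  moreover have "fundamental_set {0<..} S"
  proof -
    have sub: "S \<subseteq> {0<..}" unfolding S_def SS_def by auto
    have "gamma_Cl {0<..} S = {0<..}"
    proof
      show "gamma_Cl {0<..} S \<subseteq> {0<..}"
        unfolding gamma_Cl_def using closure_seq_sub[OF sub] by blast
      show "{0<..} \<subseteq> gamma_Cl {0<..} S"
      proof
        fix x :: real assume x: "x \<in> {0<..}"
        obtain m :: nat where "x \<le> real m" using real_arch_simple by blast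
        hence "x \<in> closure_seq {0<..} S (m + 1)"
          using all_part[OF Q1, of x m] x unfolding S_def by auto
        thus "x \<in> gamma_Cl {0<..} S" unfolding gamma_Cl_def by blast
      qed
    qed
    thus ?thesis unfolding fundamental_set_def using sub by simp
  qed
  ultimately show ?thesis using m(1) by blast
qed

end
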